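(* For $\mu\in\Lambda$ with dominant representative $\mu^+\in W\mu$, the following are equivalent: (1) $\langle\alpha^\vee,\mu\rangle\geqslant-1$ for every positive root $\alpha^\vee\in\Delta^\vee_+$; (2) for every dominant $\lambda'\in\Lambda^+$, the inequalities $\mu\leqslant\lambda'\leqslant\mu^+$ imply $\lambda'=\mu^+$.
   Context: $G$ connected reductive over $\mathbb C$ with maximal torus $T$ and Borel $B$; $\Lambda$ coweight lattice, $\Lambda^+$ dominant coweights, $W$ Weyl group, $\Delta^\vee_+$ positive roots, $\langle\cdot,\cdot\rangle$ the pairing; $\mu\leqslant\lambda$ means $\lambda-\mu$ is a nonnegative integer combination of simple coroots; $\mu^+$ denotes the unique dominant element of $W\mu$. *)

theory Defs
  imports "HOL-Analysis.Analysis"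
begin

text \<open>The coweight lattice Lambda is int^'n (rank = CARD('n)); the roots (written
  alpha^vee in the paper) live in the dual lattice, also modelled as int^'n, with
  the standard pairing.
  Connected reductive groups over C correspond to reduced root data.\<close>

definition pair :: "int^'n \<Rightarrow> int^'n \<Rightarrow> int" where
  "pair a x = (\<Sum>i\<in>UNIV. a $ i * x $ i)"

definition refl :: "(int^'n \<Rightarrow> int^'n) \<Rightarrow> int^'n \<Rightarrow> int^'n \<Rightarrow> int^'n" where
  "refl cor a x = x - pair a x *s cor a"

definition refl_dual :: "(int^'n \<Rightarrow> int^'n) \<Rightarrow> int^'n \<Rightarrow> int^'n \<Rightarrow> int^'n" where
  "refl_dual cor a b = b - pair b (cor a) *s a"

definition reduced_root_datum :: "(int^'n) set \<Rightarrow> (int^'n \<Rightarrow> int^'n) \<Rightarrow> bool" where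
  "reduced_root_datum R cor \<longleftrightarrow>
     finite R \<and> inj_on cor R \<and>
     (\<forall>a\<in>R. pair a (cor a) = 2) \<and>
     (\<forall>a\<in>R. \<forall>b\<in>R. refl_dual cor a b \<in> R) \<and>
     (\<forall>a\<in>R. \<forall>b\<in>R. refl cor a (cor b) \<in> cor ` R) \<and>
     (\<forall>a\<in>R. \<forall>k::int. k *s a \<in> R \<longrightarrow> k = 1 \<or> k = -1)"

definition nat_comb :: "(int^'n) set \<Rightarrow> int^'n \<Rightarrow> bool" where
  "nat_comb S x \<longleftrightarrow> (\<exists>f :: int^'n \<Rightarrow> nat. x = (\<Sum>s\<in>S. int (f s) *s s))"

definition is_base :: "(int^'n) set \<Rightarrow> (int^'n) set \<Rightarrow> bool" where
  "is_base R S \<longleftrightarrow> S \<subseteq> R \<and>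
     (\<forall>f :: int^'n \<Rightarrow> int. (\<Sum>s\<in>S. f s *s s) = 0 \<longrightarrow> (\<forall>s\<in>S. f s = 0)) \<and>
     (\<forall>a\<in>R. nat_comb S a \<or> nat_comb S (- a))"

definition pos_roots :: "(int^'n) set \<Rightarrow> (int^'n) set \<Rightarrow> (int^'n) set" where
  "pos_roots R S = {a\<in>R. nat_comb S a}"

definition dominant :: "(int^'n) set \<Rightarrow> (int^'n) set \<Rightarrow> int^'n \<Rightarrow> bool" where
  "dominant R S x \<longleftrightarrow> (\<forall>a\<in>pos_roots R S. pair a x \<ge> 0)"

definition coweight_le :: "(int^'n) set \<Rightarrow> (int^'n \<Rightarrow> int^'n) \<Rightarrow> int^'n \<Rightarrow> int^'n \<Rightarrow> bool" where
  "coweight_le S cor mu lam \<longleftrightarrow>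
     (\<exists>f :: int^'n \<Rightarrow> nat. lam - mu = (\<Sum>s\<in>S. int (f s) *s cor s))"

inductive_set weyl_orbit :: "(int^'n) set \<Rightarrow> (int^'n \<Rightarrow> int^'n) \<Rightarrow> int^'n \<Rightarrow> (int^'n) set"
  for R cor x where
  base: "x \<in> weyl_orbit R cor x"
| step: "y \<in> weyl_orbit R cor x \<Longrightarrow> a \<in> R \<Longrightarrow> refl cor a y \<in> weyl_orbit R cor x"

end

theory Submission
  imports Defs
begin


lemma pair_add_left: "pair (a + b) x = pair a x + pair b x"
  by (simp add: pair_def distrib_right sum.distrib)
lemma pair_add_right: "pair a (x + y) = pair a x + pair a y"
  by (simp add: pair_def distrib_left sum.distrib)
lemma pair_diff_left: "pair (a - b) x = pair a x - pair b x"
  by (simp add: pair_def left_diff_distrib sum_subtractf)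
lemma pair_diff_right: "pair a (x - y) = pair a x - pair a y"
  by (simp add: pair_def right_diff_distrib sum_subtractf)
lemma pair_neg_left: "pair (- a) x = - pair a x"
  by (simp add: pair_def sum_negf)
lemma pair_neg_right: "pair a (- x) = - pair a x"
  by (simp add: pair_def sum_negf)
lemma pair_smult_left: "pair (c *s a) x = c * pair a x"
  by (simp add: pair_def sum_distrib_left mult.assoc)
lemma pair_smult_right: "pair a (c *s x) = c * pair a x"
  by (simp add: pair_def sum_distrib_left algebra_simps)
lemma pair_zero_left[simp]: "pair 0 x = 0" by (simp add: pair_def)
lemma pair_zero_right[simp]: "pair a 0 = 0" by (simp add: pair_def)
lemma pair_sum_left: "pair (sum f A) x = (\<Sum>i\<in>A. pair (f i) x)"
  by (induction A rule: infinite_finite_induct) (auto simp: pair_add_left)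
lemma pair_sum_right: "pair a (sum f A) = (\<Sum>i\<in>A. pair a (f i))"
  by (induction A rule: infinite_finite_induct) (auto simp: pair_add_right)
lemma pair_ext_left: assumes "\<And>x. pair a x = pair b x" shows "a = b"
proof -
  have "a $ i = b $ i" for i
  proof -
    have "pair a (\<chi> j. if j = i then 1 else 0) = a $ i"
      unfolding pair_def by (simp add: if_distrib cong: if_cong)
    moreover have "pair b (\<chi> j. if j = i then 1 else 0) = b $ i"
      unfolding pair_def by (simp add: if_distrib cong: if_cong)
    ultimately show ?thesis using assms by metis
  qed
  then show ?thesis by (simp add: vec_eq_iff)
qed



locale RDB =
  fixes R S :: "(int^'n::finite) set" and cor :: "int^'n \<Rightarrow> int^'n"
  assumes rrd: "reduced_root_datum R cor" and bas: "is_base R S"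
begin

abbreviation "rd \<equiv> refl_dual cor"
abbreviation "rf \<equiv> refl cor"
abbreviation "P \<equiv> pos_roots R S"

lemma finR: "finite R" using rrd by (simp add: reduced_root_datum_def)
lemma SR: "S \<subseteq> R" using bas by (simp add: is_base_def)
lemma finS: "finite S" using finR SR finite_subset by blast
lemma two: "a \<in> R \<Longrightarrow> pair a (cor a) = 2" using rrd by (simp add: reduced_root_datum_def)
lemma rdR: "a \<in> R \<Longrightarrow> b \<in> R \<Longrightarrow> rd a b \<in> R" using rrd by (simp add: reduced_root_datum_def)
lemma rfcor: "a \<in> R \<Longrightarrow> b \<in> R \<Longrightarrow> rf a (cor b) \<in> cor ` R" using rrd by (simp add: reduced_root_datum_def)
lemma reduced: "a \<in> R \<Longrightarrow> k *s a \<in> R \<Longrightarrow> k = 1 \<or> k = -1" using rrd by (simp add: reduced_root_datum_def)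
lemma indep: "(\<Sum>s\<in>S. f s *s s) = 0 \<Longrightarrow> s \<in> S \<Longrightarrow> f s = 0" using bas by (simp add: is_base_def)
lemma rootsign: "a \<in> R \<Longrightarrow> nat_comb S a \<or> nat_comb S (- a)" using bas by (simp add: is_base_def)

lemma pair_rf: "pair b (rf a x) = pair (rd a b) x"
  by (simp add: refl_def refl_dual_def pair_diff_left pair_diff_right pair_smult_left pair_smult_right)

lemma rd_invol: "a \<in> R \<Longrightarrow> rd a (rd a b) = b"
  by (simp add: refl_dual_def pair_diff_left pair_smult_left two vec_eq_iff algebra_simps)

lemma rf_invol: "a \<in> R \<Longrightarrow> rf a (rf a x) = x"
  by (simp add: refl_def pair_diff_right pair_smult_right two vec_eq_iff algebra_simps)

lemma rf_add: "rf a (x + y) = rf a x + rf a y"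
  by (simp add: refl_def pair_add_right vector_sadd_rdistrib)
lemma rf_diff: "rf a (x - y) = rf a x - rf a y"
  by (simp add: refl_def pair_diff_right vector_sub_rdistrib)
lemma rf_smult: "rf a (c *s x) = c *s rf a x"
  by (simp add: refl_def pair_smult_right vector_ssub_ldistrib vector_smult_assoc)
lemma rf_cor: "a \<in> R \<Longrightarrow> rf a (cor a) = - cor a"
  by (simp add: refl_def two vec_eq_iff algebra_simps)
lemma rf_eq: "rf a x = x + (- pair a x) *s cor a"
  by (simp add: refl_def vector_smult_lneg)
lemma rd_self: "a \<in> R \<Longrightarrow> rd a a = - a"
  by (simp add: refl_dual_def two vec_eq_iff algebra_simps)
lemma negR: "a \<in> R \<Longrightarrow> - a \<in> R" using rd_self rdR by metis
lemma nonzero: "a \<in> R \<Longrightarrow> a \<noteq> 0" using two by force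

lemma uniq:
  assumes "(\<Sum>s\<in>S. f s *s s) = (\<Sum>s\<in>S. g s *s s)" "s \<in> S"
  shows "f s = g s"
proof -
  have "(\<Sum>s\<in>S. (f s - g s) *s s) = 0"
    using assms(1) by (simp add: vector_sub_rdistrib sum_subtractf)
  from indep[OF this assms(2)] show ?thesis by simp
qed

lemma sum_delta_s: "s \<in> S \<Longrightarrow> (\<Sum>t\<in>S. (if t = s then m else 0) *s t) = m *s s"
proof -
  assume "s \<in> S"
  have "(\<Sum>t\<in>S. (if t = s then m else 0) *s t) = (\<Sum>t\<in>S. if t = s then m *s s else 0)"
    by (rule sum.cong) auto
  also have "\<dots> = m *s s" using \<open>s \<in> S\<close> finS by simp
  finally show ?thesis .
qed

lemma S_P: "s \<in> S \<Longrightarrow> s \<in> P"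
proof -
  assume s: "s \<in> S"
  have "(\<Sum>t\<in>S. int (if t = s then 1 else 0) *s t) = (\<Sum>t\<in>S. (if t = s then 1 else 0) *s t)"
    by (rule sum.cong) auto
  also have "\<dots> = s" using sum_delta_s[OF s, of 1] by simp
  finally have "s = (\<Sum>t\<in>S. int (if t = s then 1 else 0) *s t)" by simp
  then have "nat_comb S s" unfolding nat_comb_def by (rule exI[of _ "\<lambda>t. if t = s then 1 else 0"])
  then show ?thesis using s SR by (auto simp: pos_roots_def)
qed

lemma P_R: "a \<in> P \<Longrightarrow> a \<in> R" by (simp add: pos_roots_def)

lemma P_neg: "a \<in> P \<Longrightarrow> - a \<notin> P"
proof
  assume a: "a \<in> P" and b: "- a \<in> P"
  obtain f where f: "a = (\<Sum>s\<in>S. int (f s) *s s)" using a by (auto simp: pos_roots_def nat_comb_def)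
  obtain g where g: "- a = (\<Sum>s\<in>S. int (g s) *s s)" using b by (auto simp: pos_roots_def nat_comb_def)
  have "(\<Sum>s\<in>S. (int (f s) + int (g s)) *s s) = (\<Sum>s\<in>S. int (f s) *s s) + (\<Sum>s\<in>S. int (g s) *s s)"
    by (simp add: vector_sadd_rdistrib sum.distrib)
  also have "\<dots> = a + - a" using f g by simp
  finally have "(\<Sum>s\<in>S. (int (f s) + int (g s)) *s s) = 0" by simp
  from indep[OF this] have "\<forall>s\<in>S. int (f s) + int (g s) = 0" by blast
  then have "\<forall>s\<in>S. f s = 0" by auto
  then have "a = 0" using f by simp
  then show False using nonzero a P_R by blast
qed

lemma R_cases: "a \<in> R \<Longrightarrow> a \<in> P \<or> - a \<in> P"
  using rootsign negR by (auto simp: pos_roots_def)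

lemma F2:
  assumes s: "s \<in> S" and b: "b \<in> P" and bs: "b \<noteq> s"
  shows "rd s b \<in> P"
proof -
  have bR: "b \<in> R" using b P_R by blast
  have sR: "s \<in> R" using s SR by blast
  have rR: "rd s b \<in> R" using rdR sR bR by blast
  obtain f where f: "b = (\<Sum>t\<in>S. int (f t) *s t)" using b by (auto simp: pos_roots_def nat_comb_def)
  define m where "m = pair b (cor s)"
  have rdeq: "rd s b = b - m *s s" by (simp add: refl_dual_def m_def)
  show ?thesis
  proof (cases "nat_comb S (rd s b)")
    case True then show ?thesis using rR by (simp add: pos_roots_def)
  next
    case False
    then have "nat_comb S (- rd s b)" using rootsign rR by blast
    then obtain g where g: "- rd s b = (\<Sum>t\<in>S. int (g t) *s t)" by (auto simp: nat_comb_def)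
    have "(\<Sum>t\<in>S. (int (f t) + int (g t) - (if t = s then m else 0)) *s t)
        = b + (- rd s b) - m *s s"
      using f g sum_delta_s[OF s, of m] by (simp add: vector_sadd_rdistrib vector_sub_rdistrib sum.distrib sum_subtractf)
    also have "\<dots> = 0" using rdeq by simp
    finally have "(\<Sum>t\<in>S. (int (f t) + int (g t) - (if t = s then m else 0)) *s t) = 0" .
    from indep[OF this] have z: "\<forall>t\<in>S. int (f t) + int (g t) - (if t = s then m else 0) = 0" by blast
    have "\<forall>t\<in>S. t \<noteq> s \<longrightarrow> f t = 0" using z by fastforce
    then have "b = (\<Sum>t\<in>S. (if t = s then int (f s) else 0) *s t)"
      unfolding f by (intro sum.cong) auto
    also have "\<dots> = int (f s) *s s" using sum_delta_s[OF s] by simp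
    finally have bfs: "b = int (f s) *s s" .
    have "int (f s) *s s \<in> R" using bfs bR by simp
    from reduced[OF sR this] have "int (f s) = 1 \<or> int (f s) = -1" .
    then have "int (f s) = 1" by linarith
    then have "b = s" using bfs by simp
    with bs show ?thesis by simp
  qed
qed

lemma cartan_off:
  assumes s: "s \<in> S" and t: "t \<in> S" and st: "s \<noteq> t"
  shows "pair s (cor t) \<le> 0"
proof -
  have "rd t s \<in> P" using F2[OF t S_P[OF s]] st by blast
  then obtain g where g: "rd t s = (\<Sum>u\<in>S. int (g u) *s u)" by (auto simp: pos_roots_def nat_comb_def)
  define m where "m = pair s (cor t)"
  have "(\<Sum>u\<in>S. (int (g u) - (if u = s then 1 else 0) + (if u = t then m else 0)) *s u)
      = rd t s - s + m *s t"
    using g sum_delta_s[OF s, of 1] sum_delta_s[OF t, of m]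
    by (simp add: vector_sadd_rdistrib vector_sub_rdistrib sum.distrib sum_subtractf)
  also have "\<dots> = 0" by (simp add: refl_dual_def m_def)
  finally have "(\<Sum>u\<in>S. (int (g u) - (if u = s then 1 else 0) + (if u = t then m else 0)) *s u) = 0" .
  from indep[OF this t] have "int (g t) - (if t = s then 1 else 0) + (if t = t then m else 0) = 0" by simp
  then show ?thesis using st m_def by auto
qed

lemma dom_simple:
  assumes "\<forall>s\<in>S. pair s x \<ge> 0" shows "dominant R S x"
  unfolding dominant_def
proof
  fix a assume "a \<in> P"
  then obtain f where f: "a = (\<Sum>t\<in>S. int (f t) *s t)" by (auto simp: pos_roots_def nat_comb_def)
  have "pair a x = (\<Sum>t\<in>S. int (f t) * pair t x)" unfolding f by (simp add: pair_sum_left pair_smult_left)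
  also have "\<dots> \<ge> 0" using assms by (intro sum_nonneg) auto
  finally show "pair a x \<ge> 0" .
qed

end


context RDB begin

definition Bf :: "int^'n \<Rightarrow> int^'n \<Rightarrow> int" where
  "Bf x y = (\<Sum>b\<in>R. pair b x * pair b y)"
definition K :: "int^'n \<Rightarrow> int" where "K a = Bf (cor a) (cor a)"

lemma rd_bij: "a \<in> R \<Longrightarrow> bij_betw (rd a) R R"
  by (rule bij_betwI[where g="rd a"]) (auto simp: rdR rd_invol)

lemma Bf_sym: "Bf x y = Bf y x" by (simp add: Bf_def mult.commute)
lemma Bf_add_right: "Bf x (y + z) = Bf x y + Bf x z"
  by (simp add: Bf_def pair_add_right distrib_left sum.distrib)
lemma Bf_add_left: "Bf (y + z) x = Bf y x + Bf z x"
  by (simp add: Bf_def pair_add_right distrib_right sum.distrib)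
lemma Bf_diff_right: "Bf x (y - z) = Bf x y - Bf x z"
  by (simp add: Bf_def pair_diff_right right_diff_distrib sum_subtractf)
lemma Bf_diff_left: "Bf (y - z) x = Bf y x - Bf z x"
  by (simp add: Bf_def pair_diff_right left_diff_distrib sum_subtractf)
lemma Bf_smult_right: "Bf x (c *s y) = c * Bf x y"
  by (simp add: Bf_def pair_smult_right sum_distrib_left algebra_simps)
lemma Bf_smult_left: "Bf (c *s y) x = c * Bf y x"
  by (simp add: Bf_def pair_smult_right sum_distrib_left algebra_simps)
lemma Bf_neg_right: "Bf x (- y) = - Bf x y"
  by (simp add: Bf_def pair_neg_right sum_negf)
lemma Bf_zero_right[simp]: "Bf x 0 = 0" by (simp add: Bf_def)
lemma Bf_sum_right: "Bf x (sum f A) = (\<Sum>i\<in>A. Bf x (f i))"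
  by (induction A rule: infinite_finite_induct) (simp_all add: Bf_add_right)

lemma Bf_inv: assumes "a \<in> R" shows "Bf (rf a x) (rf a y) = Bf x y"
proof -
  have "Bf (rf a x) (rf a y) = (\<Sum>b\<in>R. pair (rd a b) x * pair (rd a b) y)"
    by (simp add: Bf_def pair_rf)
  also have "\<dots> = Bf x y" unfolding Bf_def
    by (rule sum.reindex_bij_betw[OF rd_bij[OF assms], where g="\<lambda>b. pair b x * pair b y"])
  finally show ?thesis .
qed

lemma Bf_rf_right: "a \<in> R \<Longrightarrow> Bf x (rf a y) = Bf (rf a x) y"
  using Bf_inv[of a x "rf a y"] rf_invol by simp

lemma Bf_cor: assumes a: "a \<in> R" shows "2 * Bf x (cor a) = pair a x * K a"
proof -
  have "Bf (rf a x) (rf a (cor a)) = Bf x (cor a)" using Bf_inv[OF a] .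
  then have "Bf (x + (- pair a x) *s cor a) (- cor a) = Bf x (cor a)"
    by (simp add: rf_cor a rf_eq[of a x])
  then have "- Bf x (cor a) + pair a x * K a = Bf x (cor a)"
    by (simp add: Bf_add_left Bf_neg_right Bf_smult_left K_def)
  then show ?thesis by simp
qed

lemma Kpos: assumes a: "a \<in> R" shows "K a > 0"
proof -
  have "pair a (cor a) * pair a (cor a) \<le> K a"
    unfolding K_def Bf_def using a finR by (intro member_le_sum) auto
  then show ?thesis using two[OF a] by simp
qed

lemma cor_equiv: assumes a: "a \<in> R" and b: "b \<in> R" shows "cor (rd a b) = rf a (cor b)"
proof -
  obtain c where c: "c \<in> R" "rf a (cor b) = cor c" using rfcor[OF a b] by blast
  have Kc: "K c = K b" unfolding K_def using c(2)[symmetric] Bf_inv[OF a] by simp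
  have "pair c x = pair (rd a b) x" for x
  proof -
    have "pair c x * K b = 2 * Bf x (cor c)" using Bf_cor[OF c(1)] Kc by simp
    also have "\<dots> = 2 * Bf (rf a x) (cor b)" using c(2) Bf_rf_right[OF a] by metis
    also have "\<dots> = pair (rd a b) x * K b" using Bf_cor[OF b] pair_rf by simp
    finally show ?thesis using Kpos[OF b] by simp
  qed
  then have "c = rd a b" by (rule pair_ext_left)
  then show ?thesis using c by simp
qed

lemma cor_neg: "a \<in> R \<Longrightarrow> cor (- a) = - cor a"
  using cor_equiv[of a a] rd_self rf_cor by simp

lemma rf_neg: "a \<in> R \<Longrightarrow> rf (- a) x = rf a x"
  by (simp add: refl_def cor_neg pair_neg_left vec_eq_iff)

lemma rf_conj: assumes a: "a \<in> R" and b: "b \<in> R" shows "rf (rd a b) x = rf a (rf b (rf a x))"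
proof -
  have "rf a (rf b (rf a x)) = rf a (rf a x - pair b (rf a x) *s cor b)" by (simp add: refl_def)
  also have "\<dots> = x - pair b (rf a x) *s rf a (cor b)" by (simp add: rf_diff rf_smult rf_invol a)
  also have "\<dots> = rf (rd a b) x"
    by (simp only: refl_def[of cor "rd a b" x] cor_equiv[OF a b] pair_rf)
  finally show ?thesis by simp
qed

lemma coroot_indep:
  assumes z: "(\<Sum>s\<in>S. g s *s cor s) = 0" and s: "s \<in> S" shows "g s = 0"
proof -
  have "pair (\<Sum>t\<in>S. (g t * K t) *s t) x = 0" for x
  proof -
    have "pair (\<Sum>t\<in>S. (g t * K t) *s t) x = (\<Sum>t\<in>S. g t * (pair t x * K t))"
      by (simp add: pair_sum_left pair_smult_left algebra_simps)
    also have "\<dots> = (\<Sum>t\<in>S. g t * (2 * Bf x (cor t)))"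
      using SR by (intro sum.cong) (auto simp: Bf_cor)
    also have "\<dots> = 2 * Bf x (\<Sum>t\<in>S. g t *s cor t)"
      by (simp add: Bf_sum_right Bf_smult_right sum_distrib_left algebra_simps)
    also have "\<dots> = 0" using z by (simp add: Bf_def)
    finally show ?thesis .
  qed
  then have "(\<Sum>t\<in>S. (g t * K t) *s t) = 0" by (intro pair_ext_left) simp
  from indep[OF this s] have "g s * K s = 0" .
  then show ?thesis using Kpos[of s] s SR by auto
qed

lemma coroot_uniq:
  assumes "(\<Sum>s\<in>S. f s *s cor s) = (\<Sum>s\<in>S. g s *s cor s)" "s \<in> S" shows "f s = g s"
proof -
  have "(\<Sum>s\<in>S. (f s - g s) *s cor s) = 0"
    using assms(1) by (simp add: vector_sub_rdistrib sum_subtractf)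
  from coroot_indep[OF this assms(2)] show ?thesis by simp
qed

abbreviation "le \<equiv> coweight_le S cor"

lemma le_refl: "le x x"
  unfolding coweight_le_def by (rule exI[of _ "\<lambda>_. 0"]) simp

lemma le_trans: assumes "le x y" "le y z" shows "le x z"
proof -
  obtain f where f: "y - x = (\<Sum>s\<in>S. int (f s) *s cor s)" using assms(1) by (auto simp: coweight_le_def)
  obtain g where g: "z - y = (\<Sum>s\<in>S. int (g s) *s cor s)" using assms(2) by (auto simp: coweight_le_def)
  have "z - x = (\<Sum>s\<in>S. int ((\<lambda>s. f s + g s) s) *s cor s)"
    using f g by (simp add: vector_sadd_rdistrib sum.distrib algebra_simps)
  then show ?thesis unfolding coweight_le_def by (rule exI[of _ "\<lambda>s. f s + g s"])
qed

lemma le_add: assumes s: "s \<in> S" and k: "k \<ge> 0" shows "le x (x + k *s cor s)"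
proof -
  have "(\<Sum>t\<in>S. int ((\<lambda>t. if t = s then nat k else 0) t) *s cor t) = (\<Sum>t\<in>S. if t = s then k *s cor s else 0)"
    using k by (intro sum.cong) auto
  also have "\<dots> = k *s cor s" using s finS by simp
  finally show ?thesis unfolding coweight_le_def by (metis add_diff_cancel_left')
qed

lemma le_antisym: assumes "le x y" "le y x" shows "x = y"
proof -
  obtain f where f: "y - x = (\<Sum>s\<in>S. int (f s) *s cor s)" using assms(1) by (auto simp: coweight_le_def)
  obtain g where g: "x - y = (\<Sum>s\<in>S. int (g s) *s cor s)" using assms(2) by (auto simp: coweight_le_def)
  have "(\<Sum>s\<in>S. (int (f s) + int (g s)) *s cor s) = (y - x) + (x - y)"
    using f g by (simp add: vector_sadd_rdistrib sum.distrib)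
  also have "\<dots> = 0" by simp
  finally have z: "(\<Sum>s\<in>S. (int (f s) + int (g s)) *s cor s) = 0" .
  have "\<forall>s\<in>S. f s = 0" using coroot_indep[OF z] by fastforce
  then have "y - x = 0" using f by simp
  then show ?thesis by simp
qed

end


context RDB begin

lemma sum_delta_h: "s \<in> S \<Longrightarrow> (\<Sum>t\<in>S. (if t = s then (m::int) else 0) *s (h t :: int^'n)) = m *s h s"
proof -
  assume "s \<in> S"
  have "(\<Sum>t\<in>S. (if t = s then m else 0) *s h t) = (\<Sum>t\<in>S. if t = s then m *s h s else 0)"
    by (rule sum.cong) auto
  also have "\<dots> = m *s h s" using \<open>s \<in> S\<close> finS by simp
  finally show ?thesis .
qed

primrec rw where "rw [] x = x" | "rw (a # L) x = rf a (rw L x)"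
primrec rwd where "rwd [] b = b" | "rwd (a # L) b = rd a (rwd L b)"

lemma rw_append: "rw (L @ M) x = rw L (rw M x)" by (induction L) auto
lemma rwd_append: "rwd (L @ M) x = rwd L (rwd M x)" by (induction L) auto
lemma rw_add: "rw L (x + y) = rw L x + rw L y" by (induction L) (auto simp: rf_add)
lemma rw_smult: "rw L (c *s x) = c *s rw L x" by (induction L) (auto simp: rf_smult)
lemma rw_Bf: "set L \<subseteq> R \<Longrightarrow> Bf (rw L x) (rw L y) = Bf x y" by (induction L) (auto simp: Bf_inv)
lemma rw_rev_inv: "set L \<subseteq> R \<Longrightarrow> rw (rev L) (rw L x) = x"
  by (induction L arbitrary: x) (auto simp: rw_append rf_invol)
lemma rw_inv_rev: "set L \<subseteq> R \<Longrightarrow> rw L (rw (rev L) x) = x"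
  using rw_rev_inv[of "rev L"] by simp
lemma pair_rw: "pair b (rw L x) = pair (rwd (rev L) b) x"
  by (induction L arbitrary: b) (auto simp: pair_rf rwd_append)
lemma rwd_R: "set L \<subseteq> R \<Longrightarrow> b \<in> R \<Longrightarrow> rwd L b \<in> R"
  by (induction L) (auto simp: rdR)
lemma rf_conj_word: "set L \<subseteq> R \<Longrightarrow> b \<in> R \<Longrightarrow> rf (rwd L b) x = rw L (rf b (rw (rev L) x))"
proof (induction L arbitrary: x)
  case Nil then show ?case by simp
next
  case (Cons a L)
  have "rf (rwd (a # L) b) x = rf a (rf (rwd L b) (rf a x))"
    using Cons.prems rf_conj rwd_R by simp
  also have "\<dots> = rw (a # L) (rf b (rw (rev (a # L)) x))"
    using Cons by (simp add: rw_append)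
  finally show ?case .
qed

lemma sign_change:
  assumes "set M \<subseteq> S" "b \<in> P" "rwd M b \<notin> P"
  shows "\<exists>M1 c M2. M = M1 @ c # M2 \<and> rwd M2 b = c"
  using assms
proof (induction M)
  case Nil then show ?case by simp
next
  case (Cons c M')
  show ?case
  proof (cases "rwd M' b \<in> P")
    case True
    have "rd c (rwd M' b) \<notin> P" using Cons.prems by simp
    then have "rwd M' b = c" using F2[of c "rwd M' b"] True Cons.prems by auto
    then show ?thesis by (intro exI[of _ "[]"]) auto
  next
    case False
    then obtain M1 c' M2 where "M' = M1 @ c' # M2" "rwd M2 b = c'" using Cons by auto
    then show ?thesis by (intro exI[of _ "c # M1"]) auto
  qed
qed

lemma SP_R: "set L \<subseteq> S \<Longrightarrow> set L \<subseteq> R" using SR by blast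

lemma min_word:
  assumes dom: "dominant R S x"
  shows "set L \<subseteq> S \<Longrightarrow> le (rw L x) x"
proof (induction "length L" arbitrary: L rule: less_induct)
  case less
  show ?case
  proof (cases L)
    case Nil then show ?thesis by (simp add: le_refl)
  next
    case (Cons s1 L1)
    have s1: "s1 \<in> S" and L1: "set L1 \<subseteq> S" using less.prems Cons by auto
    define y1 where "y1 = rw L1 x"
    have IH1: "le y1 x" unfolding y1_def using less.hyps[of L1] Cons L1 by simp
    show ?thesis
    proof (cases "pair s1 y1 \<ge> 0")
      case True
      have "y1 = rf s1 y1 + pair s1 y1 *s cor s1" by (simp add: refl_def)
      then have "le (rf s1 y1) y1" using le_add[OF s1 True, of "rf s1 y1"] by simp
      then show ?thesis using IH1 le_trans Cons y1_def by simp
    next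
      case False
      define g where "g = rwd (rev L1) s1"
      have "pair g x < 0" using False pair_rw[of s1 L1 x] y1_def g_def by simp
      then have "g \<notin> P" using dom by (auto simp: dominant_def)
      then obtain M1 c M2 where M: "rev L1 = M1 @ c # M2" and c: "rwd M2 s1 = c"
        using sign_change[of "rev L1" s1] L1 S_P[OF s1] g_def by auto
      have "set (rev L1) \<subseteq> S" using L1 by simp
      then have M2S: "set M2 \<subseteq> S" and M1S: "set M1 \<subseteq> S" unfolding M by auto
      have "L1 = rev (rev L1)" by simp
      also have "\<dots> = rev M2 @ c # rev M1" unfolding M by simp
      finally have L1eq: "L1 = rev M2 @ c # rev M1" .
      define z where "z = rw (rev M1) x"
      have "rf c (rw (rev M1) x) = rw M2 (rf s1 (rw (rev M2) z))"
        using rf_conj_word[of M2 s1] c SP_R[OF M2S] s1 SR z_def by auto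
      then have "rw L x = rf s1 (rw (rev M2) (rw M2 (rf s1 (rw (rev M2) z))))"
        using Cons L1eq by (simp add: rw_append)
      also have "\<dots> = rw (rev M2 @ rev M1) x"
        using rw_rev_inv[OF SP_R[OF M2S]] rf_invol s1 SR z_def by (auto simp: rw_append)
      finally have eq: "rw L x = rw (rev M2 @ rev M1) x" .
      have "length (rev M2 @ rev M1) < length L" using Cons L1eq by simp
      moreover have "set (rev M2 @ rev M1) \<subseteq> S" using M1S M2S by auto
      ultimately show ?thesis using less.hyps eq by metis
    qed
  qed
qed

end


context RDB begin

lemma pos_gen_step:
  assumes aP: "a \<in> P" and aS: "a \<notin> S" and f: "a = (\<Sum>s\<in>S. int (f s) *s s)"
  shows "\<exists>t\<in>S. pair a (cor t) > 0"
proof -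
  have aR: "a \<in> R" using aP P_R by blast
  have "2 = pair a (cor a)" using two[OF aR] by simp
  also have "\<dots> = (\<Sum>t\<in>S. int (f t) * pair t (cor a))"
    by (subst f) (simp add: pair_sum_left pair_smult_left)
  finally have "(\<Sum>t\<in>S. int (f t) * pair t (cor a)) > 0" by simp
  then obtain t where t: "t \<in> S" "int (f t) * pair t (cor a) > 0"
    by (metis (no_types, lifting) linorder_not_le sum_nonpos)
  then have pt: "pair t (cor a) > 0" by (simp add: zero_less_mult_iff)
  have tR: "t \<in> R" using t SR by blast
  have "2 * Bf (cor a) (cor t) = pair t (cor a) * K t" using Bf_cor[OF tR] .
  moreover have "2 * Bf (cor t) (cor a) = pair a (cor t) * K a" using Bf_cor[OF aR] .
  ultimately have "pair a (cor t) * K a = pair t (cor a) * K t" by (simp add: Bf_sym)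
  then have "pair a (cor t) * K a > 0" using pt Kpos[OF tR] by simp
  then have "pair a (cor t) > 0" using Kpos[OF aR] by (simp add: zero_less_mult_iff)
  then show ?thesis using t by blast
qed

lemma gen_pos:
  "a \<in> P \<Longrightarrow> a = (\<Sum>s\<in>S. int (f s) *s s) \<Longrightarrow> \<exists>L. set L \<subseteq> S \<and> (\<forall>x. rf a x = rw L x)"
proof (induction "sum f S" arbitrary: a f rule: less_induct)
  case less
  show ?case
  proof (cases "a \<in> S")
    case True then show ?thesis by (intro exI[of _ "[a]"]) auto
  next
    case False
    obtain t where t: "t \<in> S" and k: "pair a (cor t) > 0" using pos_gen_step[OF less.prems(1) False less.prems(2)] by blast
    define k where "k = pair a (cor t)"
    have tR: "t \<in> R" using t SR by blast
    have aR: "a \<in> R" using less.prems(1) P_R by blast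
    have a'P: "rd t a \<in> P" using F2[OF t less.prems(1)] False t by auto
    then obtain g where g: "rd t a = (\<Sum>s\<in>S. int (g s) *s s)" by (auto simp: pos_roots_def nat_comb_def)
    have "rd t a = (\<Sum>s\<in>S. (int (f s) - (if s = t then k else 0)) *s s)"
      using less.prems(2) sum_delta_s[OF t, of k]
      by (simp add: refl_dual_def k_def vector_sub_rdistrib sum_subtractf)
    then have ge: "(\<Sum>s\<in>S. int (g s) *s s) = (\<Sum>s\<in>S. (int (f s) - (if s = t then k else 0)) *s s)"
      using g by simp
    have geq: "\<forall>s\<in>S. int (g s) = int (f s) - (if s = t then k else 0)"
      using uniq[OF ge] by blast
    have "int (sum g S) = (\<Sum>s\<in>S. int (f s) - (if s = t then k else 0))"
      using geq by (simp add: of_nat_sum)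
    also have "\<dots> = int (sum f S) - k" using t finS by (simp add: sum_subtractf of_nat_sum)
    finally have e: "int (sum g S) = int (sum f S) - k" .
    from e k k_def have "int (sum g S) < int (sum f S)" by linarith
    then have lt: "sum g S < sum f S" by (simp only: of_nat_less_iff)
    obtain L' where L': "set L' \<subseteq> S" "\<forall>x. rf (rd t a) x = rw L' x" using less.hyps[OF lt a'P g] by blast
    have "rf a x = rw (t # L' @ [t]) x" for x
    proof -
      have "rf a x = rf (rd t (rd t a)) x" using rd_invol[OF tR] by simp
      also have "\<dots> = rf t (rf (rd t a) (rf t x))" using rf_conj[OF tR rdR[OF tR aR]] by simp
      also have "\<dots> = rw (t # L' @ [t]) x" using L' by (simp add: rw_append)
      finally show ?thesis .
    qed
    then show ?thesis using L' t by (intro exI[of _ "t # L' @ [t]"]) auto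
  qed
qed

lemma gen: "a \<in> R \<Longrightarrow> \<exists>L. set L \<subseteq> S \<and> (\<forall>x. rf a x = rw L x)"
proof -
  assume aR: "a \<in> R"
  show ?thesis
  proof (cases "a \<in> P")
    case True
    then obtain f where "a = (\<Sum>s\<in>S. int (f s) *s s)" by (auto simp: pos_roots_def nat_comb_def)
    then show ?thesis using gen_pos True by blast
  next
    case False
    then have nP: "- a \<in> P" using R_cases aR by blast
    then obtain f where "- a = (\<Sum>s\<in>S. int (f s) *s s)" by (auto simp: pos_roots_def nat_comb_def)
    then obtain L where "set L \<subseteq> S" "\<forall>x. rf (- a) x = rw L x" using gen_pos nP by blast
    then show ?thesis using rf_neg[OF aR] by auto
  qed
qed

lemma orbit_words: "y \<in> weyl_orbit R cor x \<Longrightarrow> \<exists>L. set L \<subseteq> S \<and> y = rw L x"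
proof (induction rule: weyl_orbit.induct)
  case base then show ?case by (intro exI[of _ "[]"]) auto
next
  case (step y a)
  then obtain L where L: "set L \<subseteq> S" "y = rw L x" by blast
  obtain La where La: "set La \<subseteq> S" "\<forall>x. rf a x = rw La x" using gen step by blast
  show ?case using L La by (intro exI[of _ "La @ L"]) (auto simp: rw_append)
qed

definition N :: "int^'n \<Rightarrow> nat" where "N v = card {b \<in> P. pair b v < 0}"

lemma finP: "finite P" using finR by (simp add: pos_roots_def)

lemma N_dec: assumes s: "s \<in> S" and neg: "pair s v < 0" shows "N (rf s v) < N v"
proof -
  have sR: "s \<in> R" using s SR by blast
  have sP: "s \<in> P" using S_P[OF s] .
  let ?A = "{b \<in> P. pair b v < 0}"
  have sub: "{b \<in> P. pair b (rf s v) < 0} \<subseteq> rd s ` (?A - {s})"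
  proof
    fix b assume b: "b \<in> {b \<in> P. pair b (rf s v) < 0}"
    have "pair s (rf s v) = - pair s v" using pair_rf rd_self[OF sR] pair_neg_left by simp
    then have bs: "b \<noteq> s" using b neg by auto
    have "rd s b \<in> P" using F2[OF s] b bs by auto
    moreover have "pair (rd s b) v < 0" using b pair_rf by simp
    moreover have "rd s b \<noteq> s"
    proof
      assume "rd s b = s"
      then have "b = - s" using rd_invol[OF sR, of b] rd_self[OF sR] by metis
      then show False using b P_neg[OF sP] by simp
    qed
    moreover have "b = rd s (rd s b)" using rd_invol[OF sR] by simp
    ultimately show "b \<in> rd s ` (?A - {s})" by blast
  qed
  have "N (rf s v) \<le> card (rd s ` (?A - {s}))"
    unfolding N_def using sub finP by (intro card_mono) auto
  also have "\<dots> \<le> card (?A - {s})" by (rule card_image_le) (use finP in auto)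
  also have "\<dots> < card ?A" using sP neg finP by (intro card_Diff1_less) auto
  finally show ?thesis by (simp add: N_def)
qed

lemma not_dom: "\<not> dominant R S v \<Longrightarrow> \<exists>s\<in>S. pair s v < 0"
  using dom_simple by force

lemma chain: "\<exists>L. set L \<subseteq> S \<and> dominant R S (rw L v) \<and> le v (rw L v)"
proof (induction "N v" arbitrary: v rule: less_induct)
  case less
  show ?case
  proof (cases "dominant R S v")
    case True then show ?thesis by (intro exI[of _ "[]"]) (auto simp: le_refl)
  next
    case False
    then obtain s where s: "s \<in> S" "pair s v < 0" using not_dom by blast
    obtain L where L: "set L \<subseteq> S" "dominant R S (rw L (rf s v))" "le (rf s v) (rw L (rf s v))"
      using less N_dec[OF s] by blast
    have "le v (rf s v)" using le_add[OF s(1), of "- pair s v" v] s rf_eq by simp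
    then have "le v (rw (L @ [s]) v)" using L(3) le_trans by (simp add: rw_append)
    moreover have "dominant R S (rw (L @ [s]) v)" using L(2) by (simp add: rw_append)
    moreover have "set (L @ [s]) \<subseteq> S" using L(1) s(1) by simp
    ultimately show ?thesis by blast
  qed
qed

end


context RDB begin

definition cond1 where "cond1 v \<longleftrightarrow> (\<forall>a\<in>P. pair a v \<ge> -1)"

lemma cond1_step:
  assumes s: "s \<in> S" and c: "cond1 v" and m: "pair s v = -1"
  shows "cond1 (rf s v)"
  unfolding cond1_def
proof
  fix b assume b: "b \<in> P"
  have sR: "s \<in> R" using s SR by blast
  show "pair b (rf s v) \<ge> -1"
  proof (cases "b = s")
    case True
    have "pair s (rf s v) = pair (rd s s) v" by (rule pair_rf)
    also have "\<dots> = 1" using rd_self[OF sR] pair_neg_left[of s v] m by simp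
    finally show ?thesis using True by simp
  next
    case False
    then have "rd s b \<in> P" using F2[OF s b] by simp
    then show ?thesis using c pair_rf by (simp add: cond1_def)
  qed
qed

lemma cond1_back:
  assumes s: "s \<in> S" and c: "cond1 (rf s v)" and m: "pair s v = -1"
  shows "cond1 v"
  unfolding cond1_def
proof
  fix b assume b: "b \<in> P"
  have sR: "s \<in> R" using s SR by blast
  show "pair b v \<ge> -1"
  proof (cases "b = s")
    case True then show ?thesis using m by simp
  next
    case False
    then have "rd s b \<in> P" using F2[OF s b] by simp
    then have "pair (rd s b) (rf s v) \<ge> -1" using c by (simp add: cond1_def)
    then show ?thesis using pair_rf[of "rd s b" s v] rd_invol[OF sR] by simp
  qed
qed

lemma dom_cond1: "dominant R S v \<Longrightarrow> cond1 v"
  by (force simp: dominant_def cond1_def)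

lemma lemP:
  "cond1 v \<Longrightarrow> dominant R S lam \<Longrightarrow> le v lam \<Longrightarrow>
   \<exists>L. set L \<subseteq> S \<and> dominant R S (rw L v) \<and> le (rw L v) lam"
proof (induction "N v" arbitrary: v rule: less_induct)
  case less
  show ?case
  proof (cases "dominant R S v")
    case True then show ?thesis using less.prems by (intro exI[of _ "[]"]) auto
  next
    case False
    then obtain s where s: "s \<in> S" "pair s v < 0" using not_dom by blast
    have sR: "s \<in> R" using s SR by blast
    have m: "pair s v = -1" using less.prems(1) S_P[OF s(1)] s(2) by (force simp: cond1_def)
    define v' where "v' = rf s v"
    have v'eq: "v' = v + cor s" using rf_eq[of s v] m v'_def by simp
    have c': "cond1 v'" using cond1_step[OF s(1) less.prems(1) m] v'_def by simp
    obtain f where f: "lam - v = (\<Sum>t\<in>S. int (f t) *s cor t)" using less.prems(3) by (auto simp: coweight_le_def)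
    have fs: "f s \<ge> 1"
    proof (rule ccontr)
      assume "\<not> f s \<ge> 1"
      then have f0: "f s = 0" by simp
      have "pair s (lam - v) = (\<Sum>t\<in>S. int (f t) * pair s (cor t))"
        unfolding f by (simp add: pair_sum_right pair_smult_right)
      also have "\<dots> \<le> 0"
      proof (rule sum_nonpos)
        fix t assume t: "t \<in> S"
        show "int (f t) * pair s (cor t) \<le> 0"
        proof (cases "t = s")
          case True then show ?thesis using f0 by simp
        next
          case False
          then have "pair s (cor t) \<le> 0" using cartan_off[OF s(1) t] by simp
          then show ?thesis by (simp add: mult_nonneg_nonpos)
        qed
      qed
      finally have "pair s lam \<le> -1" using m by (simp add: pair_diff_right)
      moreover have "pair s lam \<ge> 0" using less.prems(2) S_P[OF s(1)] by (simp add: dominant_def)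
      ultimately show False by simp
    qed
    have "(\<Sum>t\<in>S. int ((\<lambda>t. if t = s then f t - 1 else f t) t) *s cor t)
        = (\<Sum>t\<in>S. (int (f t) - (if t = s then 1 else 0)) *s cor t)"
      using fs by (intro sum.cong) auto
    also have "\<dots> = (lam - v) - cor s"
      using f sum_delta_h[OF s(1), of 1 cor] by (simp add: vector_sub_rdistrib sum_subtractf)
    also have "\<dots> = lam - v'" using v'eq by simp
    finally have "le v' lam" unfolding coweight_le_def by (metis)
    then obtain L where L: "set L \<subseteq> S" "dominant R S (rw L v')" "le (rw L v') lam"
      using less.hyps[of v'] N_dec[OF s] v'_def c' less.prems(2) by blast
    show ?thesis using L s(1) v'_def
      by (intro exI[of _ "L @ [s]"]) (simp add: rw_append)
  qed
qed

end


context RDB begin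

lemma smult_sum: "c *s sum f A = (\<Sum>x\<in>A. c *s (f x :: int^'n))"
  by (induction A rule: infinite_finite_induct) (auto simp: vector_add_ldistrib)

lemma le_coef: "le x y \<Longrightarrow> \<exists>g. y - x = (\<Sum>t\<in>S. int (g t) *s cor t)"
  by (simp add: coweight_le_def)

lemma lemQ:
  assumes domm: "dominant R S mup"
  shows "set M \<subseteq> S \<Longrightarrow> v = rw M mup \<Longrightarrow> \<not> cond1 v \<Longrightarrow>
         \<exists>lam'. dominant R S lam' \<and> le v lam' \<and> le lam' mup \<and> lam' \<noteq> mup"
proof (induction "N v" arbitrary: v M rule: less_induct)
  case less
  have ndom: "\<not> dominant R S v" using less.prems(3) dom_cond1 by blast
  then obtain s where s: "s \<in> S" "pair s v < 0" using not_dom by blast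
  have sR: "s \<in> R" using s SR by blast
  define p where "p = pair s v"
  show ?case
  proof (cases "p = -1")
    case True
    define v' where "v' = rf s v"
    have v'eq: "v' = v + 1 *s cor s" using rf_eq[of s v] True p_def v'_def by simp
    have "\<not> cond1 v'"
    proof
      assume "cond1 v'"
      then have "cond1 v" using cond1_back[OF s(1), of v] True p_def v'_def by simp
      then show False using less.prems(3) by simp
    qed
    moreover have "v' = rw (s # M) mup" using less.prems(2) v'_def by simp
    moreover have "set (s # M) \<subseteq> S" using less.prems(1) s by simp
    moreover have Nlt: "N v' < N v" using N_dec[OF s] v'_def by simp
    ultimately obtain lam' where lam': "dominant R S lam'" "le v' lam'" "le lam' mup" "lam' \<noteq> mup"
      using less.hyps[OF Nlt] by blast
    have "le v v'" using le_add[OF s(1), of 1 v] v'eq by simp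
    then show ?thesis using lam' le_trans by blast
  next
    case False
    then have pk: "p \<le> -2" using s p_def by simp
    define k where "k = - p"
    define v2 where "v2 = v + 1 *s cor s"
    obtain L where L: "set L \<subseteq> S" "dominant R S (rw L v2)" "le v2 (rw L v2)" using chain by blast
    define e where "e = rw L v2"
    have LR: "set L \<subseteq> R" "set M \<subseteq> R" using L(1) less.prems(1) SP_R by auto
    have "le v v2" using le_add[OF s(1), of 1 v] unfolding v2_def by simp
    then have lev: "le v e" using L(3) le_trans unfolding e_def by blast
    have "Bf e e = Bf v2 v2" unfolding e_def using rw_Bf[OF LR(1)] .
    also have "\<dots> = Bf v v + 2 * Bf v (cor s) + K s"
      by (simp add: v2_def Bf_add_left Bf_add_right Bf_sym K_def)
    also have "\<dots> = Bf v v + p * K s + K s" using Bf_cor[OF sR, of v] p_def by simp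
    also have "Bf v v = Bf mup mup" using less.prems(2) rw_Bf[OF LR(2)] by simp
    finally have norm: "Bf e e = Bf mup mup + (p + 1) * K s" by (simp add: algebra_simps)
    have neq: "e \<noteq> mup"
    proof
      assume "e = mup"
      then have "(p + 1) * K s = 0" using norm by simp
      then show False using Kpos[OF sR] pk by simp
    qed
    have A1: "le (rw L v) mup" using min_word[OF domm, of "L @ M"] L(1) less.prems(1,2) by (simp add: rw_append)
    have A2: "le (rw L (rf s v)) mup" using min_word[OF domm, of "L @ s # M"] L(1) less.prems(1,2) s(1)
      by (simp add: rw_append)
    have A0: "le v mup" using min_word[OF domm, of M] less.prems(1,2) by simp
    obtain g1 where g1: "mup - rw L v = (\<Sum>t\<in>S. int (g1 t) *s cor t)" using le_coef[OF A1] by blast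
    obtain g2 where g2: "mup - rw L (rf s v) = (\<Sum>t\<in>S. int (g2 t) *s cor t)" using le_coef[OF A2] by blast
    obtain g0 where g0: "mup - v = (\<Sum>t\<in>S. int (g0 t) *s cor t)" using le_coef[OF A0] by blast
    obtain g3 where g3: "e - v2 = (\<Sum>t\<in>S. int (g3 t) *s cor t)" using le_coef[OF L(3)] e_def by blast
    define h where "h t = int (g0 t) - (if t = s then 1 else 0) - int (g3 t)" for t
    have eA: "e = rw L v + rw L (cor s)" unfolding e_def v2_def by (simp add: rw_add)
    have rfA: "rw L (rf s v) = rw L v + k *s rw L (cor s)"
      using rf_eq[of s v] p_def k_def by (simp add: rw_add rw_smult)
    have "k *s (mup - e) = (k - 1) *s (mup - rw L v) + (mup - rw L (rf s v))"
      unfolding eA rfA by (simp add: vec_eq_iff algebra_simps)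
    also have "\<dots> = (\<Sum>t\<in>S. ((k - 1) * int (g1 t) + int (g2 t)) *s cor t)"
      unfolding g1 g2 by (simp add: smult_sum vector_smult_assoc vector_sadd_rdistrib sum.distrib)
    finally have E1: "k *s (mup - e) = (\<Sum>t\<in>S. ((k - 1) * int (g1 t) + int (g2 t)) *s cor t)" .
    have "mup - e = (mup - v) - 1 *s cor s - (e - v2)" by (simp add: v2_def)
    also have "\<dots> = (\<Sum>t\<in>S. h t *s cor t)"
      unfolding g0 g3 h_def using sum_delta_h[OF s(1), of 1 cor]
      by (simp add: vector_sub_rdistrib sum_subtractf)
    finally have E2: "mup - e = (\<Sum>t\<in>S. h t *s cor t)" .
    have "(\<Sum>t\<in>S. (k * h t) *s cor t) = (\<Sum>t\<in>S. ((k - 1) * int (g1 t) + int (g2 t)) *s cor t)"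
      using E1 E2 by (simp add: smult_sum vector_smult_assoc)
    from coroot_uniq[OF this] have kh: "\<forall>t\<in>S. k * h t = (k - 1) * int (g1 t) + int (g2 t)" by blast
    have hpos: "\<forall>t\<in>S. h t \<ge> 0"
    proof
      fix t assume "t \<in> S"
      then have "k * h t \<ge> 0" using kh k_def pk by simp
      moreover have "k > 0" using k_def pk by simp
      ultimately show "h t \<ge> 0" by (simp add: zero_le_mult_iff)
    qed
    have "mup - e = (\<Sum>t\<in>S. int ((\<lambda>t. nat (h t)) t) *s cor t)"
      unfolding E2 using hpos by (intro sum.cong) auto
    then have "le e mup" unfolding coweight_le_def by (rule exI[of _ "\<lambda>t. nat (h t)"])
    then show ?thesis using L(2) lev neq e_def by blast
  qed
qed

end

theorem mainTheorem19:
  fixes R S :: "(int^'n) set" and cor :: "int^'n \<Rightarrow> int^'n" and mu mup :: "int^'n"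
  assumes "reduced_root_datum R cor"
    and "is_base R S"
    and "mup \<in> weyl_orbit R cor mu"
    and "dominant R S mup"
  shows "(\<forall>a\<in>pos_roots R S. pair a mu \<ge> -1) \<longleftrightarrow>
         (\<forall>lam'. dominant R S lam' \<and> coweight_le S cor mu lam' \<and> coweight_le S cor lam' mup
                 \<longrightarrow> lam' = mup)"
proof -
  interpret RDB R S cor using assms(1,2) by unfold_locales
  obtain L where L: "set L \<subseteq> S" "mup = rw L mu" using orbit_words[OF assms(3)] by blast
  have mu: "mu = rw (rev L) mup" using L rw_rev_inv[OF SP_R[OF L(1)]] by simp
  show ?thesis
  proof
    assume h1: "\<forall>a\<in>pos_roots R S. pair a mu \<ge> -1"
    show "\<forall>lam'. dominant R S lam' \<and> coweight_le S cor mu lam' \<and> coweight_le S cor lam' mup \<longrightarrow> lam' = mup"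
    proof (intro allI impI)
      fix lam' assume H: "dominant R S lam' \<and> coweight_le S cor mu lam' \<and> coweight_le S cor lam' mup"
      obtain L2 where L2: "set L2 \<subseteq> S" "dominant R S (rw L2 mu)" "le (rw L2 mu) lam'"
        using lemP[of mu lam'] h1 H by (auto simp: cond1_def)
      have "mup = rw (L @ rev L2) (rw L2 mu)"
        using L(2) rw_rev_inv[OF SP_R[OF L2(1)]] by (simp add: rw_append)
      moreover have "le (rw (L @ rev L2) (rw L2 mu)) (rw L2 mu)"
        using min_word[OF L2(2)] L(1) L2(1) by simp
      ultimately have "le mup lam'" using L2(3) le_trans by metis
      then show "lam' = mup" using H le_antisym by blast
    qed
  next
    assume h2: "\<forall>lam'. dominant R S lam' \<and> coweight_le S cor mu lam' \<and> coweight_le S cor lam' mup \<longrightarrow> lam' = mup"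
    show "\<forall>a\<in>pos_roots R S. pair a mu \<ge> -1"
    proof (rule ccontr)
      assume "\<not> (\<forall>a\<in>pos_roots R S. pair a mu \<ge> -1)"
      then have "\<not> cond1 mu" by (simp add: cond1_def)
      then obtain lam' where "dominant R S lam'" "le mu lam'" "le lam' mup" "lam' \<noteq> mup"
        using lemQ[OF assms(4), of "rev L" mu] L(1) mu by auto
      then show False using h2 by blast
    qed
  qed
qed


end
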